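(* Let $d\ge2$, $p>p_c(d)$, $\vec\ell\in S^{d-1}$, $\lambda>0$ and $\alpha>d+3$. There is a constant $c>0$ such that for every $L\ge1$ and every configuration $\omega$ with $0\in K_\infty$, \[ \Lambda_\omega(B(L,L^\alpha))\geq cL^{-2d\alpha}e^{-2\lambda\,\mathcal{B}\mathcal{K}(L,L^\alpha)}. \]
   Context: $\omega$ is a bond percolation configuration on $E(\mathbb{Z}^d)$ with unique infinite open cluster $K_\infty$. With $\ell=\lambda\vec\ell$, open edges $[x,y]$ have conductance $c^\omega([x,y])=e^{(x+y)\cdot\ell}$, closed ones $0$; $\pi^\omega(x)=\sum_{y\sim x}c^\omega(x,y)$. Let $f_1=\vec\ell,\dots,f_d$ be an orthonormal basis of $\mathbb{R}^d$, $B(L,L')=\{z\in\mathbb{Z}^d:|z\cdot\vec\ell|<L,\ |z\cdot f_i|<L'\ (2\le i\le d)\}$. Dirichlet form $\mathcal{E}(f,f)=\frac12\sum_{|x-y|=1}(f(y)-f(x))^2c^\omega([x,y])$. $\Lambda_\omega(B)=\inf\{\mathcal{E}(f,f): f=0 \text{ off } B\cap K_\infty,\ \|f\|_{L^2(\pi^\omega)}=1\}$ if $B\cap K_\infty\ne\emptyset$ and $\Lambda_\omega(B)=\infty$ otherwise. $\mathcal{B}\mathcal{K}(x)=0$ if $x\notin K_\infty$, otherwise $\min$ over infinite open self-avoiding paths $\pi$ from $x$ of $\max_i(x-\pi(i))\cdot\vec\ell$; $\mathcal{B}\mathcal{K}(L,L^\alpha)=\max_{x\in B(L,L^\alpha)}\mathcal{B}\mathcal{K}(x)$.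 *)

theory Defs
  imports "HOL-Analysis.Analysis"
begin

text \<open>Lattice Z^d is modelled as int ^ 'n (d = CARD('n)).\<close>

definition rv :: "int ^ 'n \<Rightarrow> real ^ 'n" where
  "rv z = (\<chi> i. real_of_int (z $ i))"

definition adj :: "int ^ 'n \<Rightarrow> int ^ 'n \<Rightarrow> bool" where
  "adj x y \<longleftrightarrow> (\<Sum>i\<in>UNIV. \<bar>x $ i - y $ i\<bar>) = 1"

text \<open>A bond configuration: omega {x,y} = True iff the edge [x,y] is open.\<close>
type_synonym 'n config = "(int ^ 'n) set \<Rightarrow> bool"

definition open_edge :: "'n::finite config \<Rightarrow> int ^ 'n \<Rightarrow> int ^ 'n \<Rightarrow> bool" where
  "open_edge \<omega> x y \<longleftrightarrow> adj x y \<and> \<omega> {x, y}"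

definition cluster :: "'n::finite config \<Rightarrow> int ^ 'n \<Rightarrow> (int ^ 'n) set" where
  "cluster \<omega> x = {y. (open_edge \<omega>)\<^sup>*\<^sup>* x y}"

definition infinite_clusters :: "'n::finite config \<Rightarrow> (int ^ 'n) set set" where
  "infinite_clusters \<omega> = {C. (\<exists>x. C = cluster \<omega> x) \<and> infinite C}"

text \<open>The unique infinite open cluster (meaningful when it is unique).\<close>
definition Kinf :: "'n::finite config \<Rightarrow> (int ^ 'n) set" where
  "Kinf \<omega> = (THE C. C \<in> infinite_clusters \<omega>)"

text \<open>Conductance of the pair (x,y), with drift vector ell = lambda * ellvec.\<close>
definition cond :: "'n::finite config \<Rightarrow> real ^ 'n \<Rightarrow> int ^ 'n \<Rightarrow> int ^ 'n \<Rightarrow> real" where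
  "cond \<omega> ell x y = (if open_edge \<omega> x y then exp ((rv x + rv y) \<bullet> ell) else 0)"

definition piw :: "'n::finite config \<Rightarrow> real ^ 'n \<Rightarrow> int ^ 'n \<Rightarrow> real" where
  "piw \<omega> ell x = (\<Sum>y\<in>{y. adj x y}. cond \<omega> ell x y)"

definition dirichlet :: "'n::finite config \<Rightarrow> real ^ 'n \<Rightarrow> (int ^ 'n \<Rightarrow> real) \<Rightarrow> real" where
  "dirichlet \<omega> ell f = (1/2) * infsum (\<lambda>(x,y). (f y - f x)^2 * cond \<omega> ell x y) {(x,y). adj x y}"

definition L2sq :: "'n::finite config \<Rightarrow> real ^ 'n \<Rightarrow> (int ^ 'n \<Rightarrow> real) \<Rightarrow> real" where
  "L2sq \<omega> ell f = infsum (\<lambda>x. (f x)^2 * piw \<omega> ell x) UNIV"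

definition Lambda :: "'n::finite config \<Rightarrow> real ^ 'n \<Rightarrow> (int ^ 'n) set \<Rightarrow> ereal" where
  "Lambda \<omega> ell B =
     (if B \<inter> Kinf \<omega> = {} then \<infinity>
      else Inf (ereal ` {dirichlet \<omega> ell f | f.
              (\<forall>x. x \<notin> B \<inter> Kinf \<omega> \<longrightarrow> f x = 0) \<and> sqrt (L2sq \<omega> ell f) = 1}))"

text \<open>Box B(L,L') w.r.t. an orthonormal basis f with f i0 = ellvec.\<close>
definition box :: "('n \<Rightarrow> real ^ 'n) \<Rightarrow> 'n \<Rightarrow> real \<Rightarrow> real \<Rightarrow> (int ^ 'n) set" where
  "box f i0 L L' = {z. \<bar>rv z \<bullet> f i0\<bar> < L \<and> (\<forall>i. i \<noteq> i0 \<longrightarrow> \<bar>rv z \<bullet> f i\<bar> < L')}"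

definition open_sa_path :: "'n::finite config \<Rightarrow> int ^ 'n \<Rightarrow> (nat \<Rightarrow> int ^ 'n) \<Rightarrow> bool" where
  "open_sa_path \<omega> x p \<longleftrightarrow> p 0 = x \<and> inj p \<and> (\<forall>i. open_edge \<omega> (p i) (p (Suc i)))"

text \<open>Backtrack function BK(x) (min/max rendered as Inf/Sup in ereal).\<close>
definition BK :: "'n::finite config \<Rightarrow> real ^ 'n \<Rightarrow> int ^ 'n \<Rightarrow> ereal" where
  "BK \<omega> ellvec x =
     (if x \<notin> Kinf \<omega> then 0
      else (INF p \<in> {p. open_sa_path \<omega> x p}. SUP i. ereal ((rv x - rv (p i)) \<bullet> ellvec)))"

definition BKbox :: "'n::finite config \<Rightarrow> real ^ 'n \<Rightarrow> ('n \<Rightarrow> real ^ 'n) \<Rightarrow> 'n \<Rightarrow> real \<Rightarrow> real \<Rightarrow> ereal" where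
  "BKbox \<omega> ellvec f i0 L L' = (SUP x \<in> box f i0 L L'. BK \<omega> ellvec x)"

fun expE :: "ereal \<Rightarrow> ereal" where
  "expE (ereal r) = ereal (exp r)"
| "expE PInfty = PInfty"
| "expE MInfty = 0"

end

theory Submission imports Defs "HOL-Library.FuncSet" begin

lemma vec_box_finite_card:
  fixes S :: "'n::finite \<Rightarrow> 'a set"
  assumes "\<And>j. finite (S j)"
  shows "finite {z::'a^'n. \<forall>j. z$j \<in> S j} \<and> card {z::'a^'n. \<forall>j. z$j \<in> S j} \<le> (\<Prod>j\<in>UNIV. card (S j))"
proof -
  have eq: "{z::'a^'n. \<forall>j. z$j \<in> S j} = vec_lambda ` (PiE UNIV S)"
  proof (rule set_eqI, rule iffI)
    fix z :: "'a^'n" assume "z \<in> {z. \<forall>j. z$j \<in> S j}"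
    then have "(\<lambda>j. z$j) \<in> PiE UNIV S" by auto
    moreover have "z = vec_lambda (\<lambda>j. z$j)" by simp
    ultimately show "z \<in> vec_lambda ` (PiE UNIV S)" by blast
  qed auto
  have fin: "finite (PiE UNIV S)" using assms by (simp add: finite_PiE)
  show ?thesis unfolding eq
    using fin card_image_le[OF fin, of vec_lambda] card_PiE[of UNIV S] by simp
qed

lemma adj_comp: "adj x y \<Longrightarrow> \<bar>x$j - y$j\<bar> \<le> 1"
  unfolding adj_def
  by (metis (no_types, lifting) UNIV_I abs_ge_zero finite member_le_sum)

lemma adj_sym: "adj x y \<Longrightarrow> adj y x"
  unfolding adj_def by (simp add: abs_minus_commute)

lemma nbr_finite_card:
  fixes x :: "int^'n::finite"
  shows "finite {y. adj x y} \<and> card {y. adj x y} \<le> 3 ^ CARD('n)"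
proof -
  define S where "S = (\<lambda>j. {x$j - 1 .. x$j + 1})"
  have sub: "{y. adj x y} \<subseteq> {z. \<forall>j. z$j \<in> S j}"
  proof
    fix y assume "y \<in> {y. adj x y}"
    then have a: "adj x y" by simp
    have "x$j - 1 \<le> y$j \<and> y$j \<le> x$j + 1" for j 
    proof -
      have "\<bar>x$j - y$j\<bar> \<le> 1" by (rule adj_comp[OF a])
      then show ?thesis by (simp only: abs_le_iff) linarith
    qed
    then show "y \<in> {z. \<forall>j. z$j \<in> S j}" unfolding S_def by simp
  qed
  have fS: "\<And>j. finite (S j)" unfolding S_def by simp
  have fin: "finite {z::int^'n. \<forall>j. z$j \<in> S j}" and c: "card {z::int^'n. \<forall>j. z$j \<in> S j} \<le> (\<Prod>j\<in>UNIV. card (S j))"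
    using vec_box_finite_card[of S, OF fS] by blast+
  have c3: "card (S j) = 3" for j unfolding S_def by simp
  have "(\<Prod>j\<in>UNIV. card (S j)) = 3 ^ CARD('n)" unfolding c3 by simp
  then have "card {z::int^'n. \<forall>j. z$j \<in> S j} \<le> 3 ^ CARD('n)" using c by simp
  moreover have "card {y. adj x y} \<le> card {z::int^'n. \<forall>j. z$j \<in> S j}" by (rule card_mono[OF fin sub])
  moreover have "finite {y. adj x y}" by (rule finite_subset[OF sub fin])
  ultimately show ?thesis by linarith
qed

lemma adj_norm: "adj x y \<Longrightarrow> norm (rv y - rv x) \<le> 1"
proof -
  assume a: "adj x y"
  have "norm (rv y - rv x) \<le> (\<Sum>i\<in>UNIV. \<bar>(rv y - rv x)$i\<bar>)" by (rule norm_le_l1_cart)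
  also have "\<dots> = real_of_int (\<Sum>i\<in>UNIV. \<bar>x$i - y$i\<bar>)"
    by (simp add: rv_def abs_minus_commute)
  also have "\<dots> = 1" using a unfolding adj_def by simp
  finally show ?thesis .
qed

lemma parseval:
  fixes f :: "'n::finite \<Rightarrow> real^'n"
  assumes "\<forall>i j. f i \<bullet> f j = (if i = j then 1 else 0)"
  shows "(\<Sum>i\<in>UNIV. (u \<bullet> f i)^2) = (norm u)^2"
proof -
  define Q :: "real^'n^'n" where "Q = (\<chi> i. f i)"
  have "Q ** transpose Q = mat 1"
    using assms by (simp add: Q_def matrix_matrix_mult_def transpose_def mat_def inner_vec_def vec_eq_iff mult.commute)
  then have QQ: "transpose Q ** Q = mat 1" using matrix_left_right_inverse by blast
  have "(\<Sum>i\<in>UNIV. (u \<bullet> f i)^2) = (Q *v u) \<bullet> (Q *v u)"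
    by (simp add: Q_def inner_vec_def matrix_vector_mult_def power2_eq_square inner_commute mult.commute)
  also have "\<dots> = u \<bullet> (transpose Q *v (Q *v u))"
    by (metis dot_lmul_matrix inner_commute transpose_transpose vector_transpose_matrix)
  also have "\<dots> = u \<bullet> u" using QQ by (simp add: matrix_vector_mul_assoc)
  finally show ?thesis by (simp add: power2_norm_eq_inner)
qed


lemma cond_nonneg: "cond \<omega> ell a b \<ge> 0"
  by (simp add: cond_def)

lemma piw_nonneg: "piw \<omega> ell x \<ge> 0"
  unfolding piw_def by (rule sum_nonneg) (simp add: cond_nonneg)

lemma piw_bound:
  fixes \<omega> :: "'n::finite config" and v :: "real^'n"
  assumes lam: "lam > 0" and nv: "norm v = 1"
  shows "piw \<omega> (lam *\<^sub>R v) x \<le> 3^CARD('n) * exp (2*lam*(rv x \<bullet> v) + lam)"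
proof -
  let ?b = "exp (2*lam*(rv x \<bullet> v) + lam)"
  have each: "cond \<omega> (lam *\<^sub>R v) x y \<le> ?b" if "adj x y" for y
  proof (cases "open_edge \<omega> x y")
    case True
    have "(rv y - rv x) \<bullet> (lam *\<^sub>R v) \<le> norm (rv y - rv x) * norm (lam *\<^sub>R v)"
      by (rule norm_cauchy_schwarz)
    also have "\<dots> \<le> 1 * lam" using adj_norm[OF that] lam nv
      by (intro mult_mono) auto
    finally have h: "(rv y - rv x) \<bullet> (lam *\<^sub>R v) \<le> lam" by simp
    have "(rv x + rv y) \<bullet> (lam *\<^sub>R v) = 2*lam*(rv x \<bullet> v) + (rv y - rv x) \<bullet> (lam *\<^sub>R v)"
      by (simp add: inner_add_left inner_diff_left algebra_simps)
    then show ?thesis using True h by (simp add: cond_def)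
  next
    case False then show ?thesis by (simp add: cond_def)
  qed
  have "piw \<omega> (lam *\<^sub>R v) x \<le> of_nat (card {y. adj x y}) * ?b"
    unfolding piw_def by (rule sum_bounded_above) (use each in auto)
  also have "\<dots> \<le> 3^CARD('n) * ?b"
  proof (rule mult_right_mono)
    have "card {y. adj x y} \<le> 3^CARD('n)" using nbr_finite_card[of x] by blast
    then show "real (card {y. adj x y}) \<le> 3^CARD('n)" by (metis of_nat_le_iff of_nat_numeral of_nat_power)
  qed simp
  finally show ?thesis .
qed


lemma point_bound:
  fixes \<omega> :: "'n::finite config" and v :: "real^'n" and h :: "int^'n \<Rightarrow> real"
  assumes finA: "finite A" and xA: "x \<in> A" and xK: "x \<in> Kinf \<omega>"
    and BKx: "BK \<omega> v x \<le> ereal M" and lam: "lam > 0" and nv: "norm v = 1"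
    and fz: "\<forall>y. y \<notin> A \<longrightarrow> h y = 0"
    and S0def: "S0 = {(a,b). adj a b \<and> (a\<in>A \<or> b\<in>A)}" and finS0: "finite S0"
  shows "(h x)^2 * piw \<omega> (lam *\<^sub>R v) x \<le> 3^CARD('n) * exp(3*lam) * exp(2*lam*M) * card A
           * (\<Sum>(a,b)\<in>S0. (h b - h a)^2 * cond \<omega> (lam *\<^sub>R v) a b)"
proof -
  let ?l = "lam *\<^sub>R v"
  define tm where "tm = (\<lambda>(a,b). (h b - h a)^2 * cond \<omega> ?l a b)"
  define G where "G = (\<Sum>(a,b)\<in>S0. (h b - h a)^2 * cond \<omega> ?l a b)"
  have G_eq: "G = sum tm S0" by (simp add: G_def tm_def)
  have "(INF p\<in>{p. open_sa_path \<omega> x p}. SUP i. ereal ((rv x - rv (p i)) \<bullet> v)) < ereal (M+1)"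
  proof -
    have "BK \<omega> v x < ereal (M+1)" using BKx order_le_less_trans[of _ "ereal M" "ereal (M+1)"] by simp
    then show ?thesis using xK by (simp add: BK_def)
  qed
  then obtain p where pp: "open_sa_path \<omega> x p"
    and sup: "(SUP i. ereal ((rv x - rv (p i)) \<bullet> v)) < ereal (M+1)"
    by (auto simp: INF_less_iff)
  have pv: "rv (p i) \<bullet> v > rv x \<bullet> v - M - 1" for i
  proof -
    have "ereal ((rv x - rv (p i)) \<bullet> v) < ereal (M+1)" using SUP_lessD[OF sup] by simp
    then show ?thesis by (simp add: inner_diff_left)
  qed
  have p0: "p 0 = x" and injp: "inj p" and op: "\<And>i. open_edge \<omega> (p i) (p (Suc i))"
    using pp by (auto simp: open_sa_path_def)
  have ex: "\<exists>i. p i \<notin> A"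
  proof (rule ccontr)
    assume "\<not> ?thesis"
    then have "range p \<subseteq> A" by auto
    then have "finite (range p)" using finA finite_subset by blast
    then show False using injp finite_imageD by fastforce
  qed
  define n where "n = (LEAST i. p i \<notin> A)"
  have pn: "p n \<notin> A" unfolding n_def using ex by (rule LeastI_ex)
  have pin: "p i \<in> A" if "i < n" for i using not_less_Least[of i "\<lambda>i. p i \<notin> A"] that n_def by auto
  have ncard: "n \<le> card A"
  proof -
    have "card (p ` {..<n}) = n" using injp by (simp add: card_image inj_on_subset)
    moreover have "p ` {..<n} \<subseteq> A" using pin by auto
    ultimately show ?thesis using card_mono[OF finA] by metis
  qed
  have tel: "h x = (\<Sum>i<n. h (p i) - h (p (Suc i)))"
    using sum_lessThan_telescope'[of "\<lambda>i. h (p i)" n] pn fz p0 by simp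
  define SD where "SD = (\<Sum>i<n. (h (p i) - h (p (Suc i)))^2)"
  have cs: "(h x)^2 \<le> SD * n"
    using sum_squared_le_sum_of_squares[of "\<lambda>i. h (p i) - h (p (Suc i))" "{..<n}"] tel
    by (simp add: SD_def)
  define E0 where "E0 = exp(lam*(2*(rv x \<bullet> v) - 2*M - 2))"
  have E0pos: "E0 > 0" by (simp add: E0_def)
  have condlow: "E0 \<le> cond \<omega> ?l (p i) (p (Suc i))" for i
  proof -
    have c: "cond \<omega> ?l (p i) (p (Suc i)) = exp (lam * (rv (p i) \<bullet> v + rv (p (Suc i)) \<bullet> v))"
      using op[of i] by (simp add: cond_def inner_add_left)
    have "2*(rv x \<bullet> v) - 2*M - 2 \<le> rv (p i) \<bullet> v + rv (p (Suc i)) \<bullet> v"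
      using pv[of i] pv[of "Suc i"] by linarith
    then have "lam*(2*(rv x \<bullet> v) - 2*M - 2) \<le> lam * (rv (p i) \<bullet> v + rv (p (Suc i)) \<bullet> v)"
      using lam by (intro mult_left_mono) auto
    then show ?thesis unfolding c E0_def by simp
  qed
  have sumE: "SD * E0 \<le> (\<Sum>i<n. tm (p i, p (Suc i)))"
    unfolding SD_def sum_distrib_right
  proof (rule sum_mono)
    fix i assume "i \<in> {..<n}"
    have "(h (p i) - h (p (Suc i)))^2 * E0 \<le> (h (p i) - h (p (Suc i)))^2 * cond \<omega> ?l (p i) (p (Suc i))"
      using condlow[of i] by (intro mult_left_mono) auto
    then show "(h (p i) - h (p (Suc i)))^2 * E0 \<le> tm (p i, p (Suc i))"
      by (simp add: tm_def power2_commute)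
  qed
  have pathsum: "(\<Sum>i<n. tm (p i, p (Suc i))) \<le> G"
  proof -
    have inj2: "inj_on (\<lambda>i. (p i, p (Suc i))) {..<n}"
      using injp by (auto simp: inj_on_def inj_def)
    have "(\<Sum>i<n. tm (p i, p (Suc i))) = sum tm ((\<lambda>i. (p i, p (Suc i))) ` {..<n})"
      using sum.reindex[OF inj2, of tm] by simp
    also have "\<dots> \<le> sum tm S0"
    proof (rule sum_mono2[OF finS0])
      show "(\<lambda>i. (p i, p (Suc i))) ` {..<n} \<subseteq> S0"
        using op pin unfolding S0def open_edge_def by auto
      show "\<And>b. b \<in> S0 - (\<lambda>i. (p i, p (Suc i))) ` {..<n} \<Longrightarrow> 0 \<le> tm b"
        by (auto simp: tm_def cond_nonneg)
    qed
    finally show ?thesis using G_eq by simp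
  qed
  have SDG: "SD * E0 \<le> G" using sumE pathsum by linarith
  have SDnn: "SD \<ge> 0" unfolding SD_def by (rule sum_nonneg) auto
  have Gnn: "G \<ge> 0" using SDG SDnn E0pos by (meson mult_nonneg_nonneg less_imp_le order_trans)
  have pb: "piw \<omega> ?l x \<le> 3^CARD('n) * exp (2*lam*(rv x \<bullet> v) + lam)"
    by (rule piw_bound[OF lam nv])
  have eE: "exp (2*lam*(rv x \<bullet> v) + lam) = E0 * (exp(3*lam) * exp(2*lam*M))"
    unfolding E0_def by (simp add: exp_add[symmetric] algebra_simps)
  have "(h x)^2 * piw \<omega> ?l x \<le> (SD * n) * (3^CARD('n) * exp (2*lam*(rv x \<bullet> v) + lam))"
    using cs pb SDnn by (intro mult_mono) (auto simp: piw_nonneg)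
  also have "\<dots> = (SD * E0) * n * (3^CARD('n) * exp(3*lam) * exp(2*lam*M))"
    unfolding eE by (simp add: algebra_simps)
  also have "\<dots> \<le> G * card A * (3^CARD('n) * exp(3*lam) * exp(2*lam*M))"
    using SDG ncard Gnn SDnn E0pos by (intro mult_right_mono mult_mono) auto
  finally show ?thesis unfolding G_def by (simp add: algebra_simps)
qed


lemma sum_bound:
  fixes \<omega> :: "'n::finite config" and v :: "real^'n" and h :: "int^'n \<Rightarrow> real"
  assumes finA: "finite A" and AK: "A \<subseteq> Kinf \<omega>"
    and BKx: "\<forall>x\<in>A. BK \<omega> v x \<le> ereal M" and lam: "lam > 0" and nv: "norm v = 1"
    and fz: "\<forall>y. y \<notin> A \<longrightarrow> h y = 0"
  shows "L2sq \<omega> (lam *\<^sub>R v) h \<le> 2 * 3^CARD('n) * exp(3*lam) * exp(2*lam*M) * (card A)^2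
           * dirichlet \<omega> (lam *\<^sub>R v) h"
proof -
  let ?l = "lam *\<^sub>R v"
  define S0 where "S0 = {(a,b). adj a b \<and> (a\<in>A \<or> b\<in>A)}"
  define N where "N = (\<Union>a\<in>A. {y. adj a y})"
  have finN: "finite N" unfolding N_def using finA nbr_finite_card by blast
  have sub0: "S0 \<subseteq> (A \<times> N) \<union> (N \<times> A)"
    unfolding S0_def N_def using adj_sym by blast
  then have finS0: "finite S0" by (intro finite_subset[OF sub0] finite_UnI finite_cartesian_product finA finN)
  define tm where "tm = (\<lambda>(x,y). (h y - h x)^2 * cond \<omega> ?l x y)"
  have D: "dirichlet \<omega> ?l h = (1/2) * sum tm S0"
  proof -
    have "infsum tm {(x,y). adj x y} = infsum tm S0"
    proof (rule infsum_cong_neutral)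
      fix z assume "z \<in> {(x,y). adj x y} - S0"
      then obtain a b where z: "z = (a,b)" "a \<notin> A" "b \<notin> A" by (auto simp: S0_def)
      then have "h a = 0" "h b = 0" using fz by auto
      then show "tm z = 0" using z by (simp add: tm_def)
    qed (auto simp: S0_def)
    then show ?thesis unfolding dirichlet_def tm_def[symmetric] using finS0 by simp
  qed
  have L: "L2sq \<omega> ?l h = (\<Sum>x\<in>A. (h x)^2 * piw \<omega> ?l x)"
  proof -
    have "infsum (\<lambda>x. (h x)^2 * piw \<omega> ?l x) UNIV = infsum (\<lambda>x. (h x)^2 * piw \<omega> ?l x) A"
      by (rule infsum_cong_neutral) (auto simp: fz)
    then show ?thesis unfolding L2sq_def using finA by simp
  qed
  have G: "sum tm S0 = (\<Sum>(a,b)\<in>S0. (h b - h a)^2 * cond \<omega> ?l a b)" by (simp add: tm_def)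
  define K where "K = 3^CARD('n) * exp(3*lam) * exp(2*lam*M) * card A * sum tm S0"
  have "(\<Sum>x\<in>A. (h x)^2 * piw \<omega> ?l x) \<le> (\<Sum>x\<in>A. K)"
  proof (rule sum_mono)
    fix x assume xA: "x \<in> A"
    have xK: "x \<in> Kinf \<omega>" using AK xA by blast
    have b: "BK \<omega> v x \<le> ereal M" using BKx xA by blast
    show "(h x)^2 * piw \<omega> ?l x \<le> K" unfolding K_def G
      by (rule point_bound[OF finA xA xK b lam nv fz S0_def finS0])
  qed
  also have "\<dots> = card A * K" by simp
  also have "\<dots> = 2 * 3^CARD('n) * exp(3*lam) * exp(2*lam*M) * (card A)^2 * ((1/2) * sum tm S0)"
    by (simp add: K_def power2_eq_square mult_ac)
  finally show ?thesis unfolding L D .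
qed

lemma BK_nonneg: "BK \<omega> v x \<ge> 0"
proof (cases "x \<in> Kinf \<omega>")
  case True
  have *: "0 \<le> (SUP i. ereal ((rv x - rv (p i)) \<bullet> v))" if "open_sa_path \<omega> x p" for p
  proof -
    have "p 0 = x" using that by (simp add: open_sa_path_def)
    then have e: "ereal ((rv x - rv (p 0)) \<bullet> v) = 0" by simp
    have "ereal ((rv x - rv (p 0)) \<bullet> v) \<le> (SUP i. ereal ((rv x - rv (p i)) \<bullet> v))"
      by (rule SUP_upper) simp
    then show ?thesis unfolding e .
  qed
  have "0 \<le> (INF p\<in>{p. open_sa_path \<omega> x p}. SUP i. ereal ((rv x - rv (p i)) \<bullet> v))"
  proof (rule INF_greatest)
    fix p assume "p \<in> {p. open_sa_path \<omega> x p}"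
    then show "0 \<le> (SUP i. ereal ((rv x - rv (p i)) \<bullet> v))" using * by blast
  qed
  then show ?thesis using True by (simp add: BK_def)
qed (simp add: BK_def)


lemma box_card:
  fixes f :: "'n::finite \<Rightarrow> real^'n" and L \<alpha> :: real
  assumes ortho: "\<forall>i j. f i \<bullet> f j = (if i = j then 1 else 0)" and L: "L \<ge> 1" and \<alpha>: "\<alpha> \<ge> 1"
  shows "finite (box f i0 L (L powr \<alpha>)) \<and>
         real (card (box f i0 L (L powr \<alpha>))) \<le> (3 * real CARD('n) * L powr \<alpha>) ^ CARD('n)"
proof -
  define P where "P = L powr \<alpha>"
  define d where "d = real CARD('n)"
  have d1: "d \<ge> 1" unfolding d_def by (simp add: Suc_leI)
  have LP: "L \<le> P" unfolding P_def using powr_mono[OF \<alpha> L] L by simp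
  have P1: "P \<ge> 1" using L LP by linarith
  define R where "R = d * P"
  have R1: "R \<ge> 1" unfolding R_def using d1 P1 by (metis mult_mono' mult_1 zero_le_one order_trans)
  define N where "N = \<lfloor>R\<rfloor>"
  have sub: "box f i0 L P \<subseteq> {z. \<forall>j. z$j \<in> {-N..N}}"
  proof
    fix z assume zb: "z \<in> box f i0 L P"
    have ab: "\<bar>rv z \<bullet> f i\<bar> \<le> P" for i
    proof (cases "i = i0")
      case True then show ?thesis using zb LP unfolding box_def by auto
    next
      case False then show ?thesis using zb unfolding box_def by auto
    qed
    have sq: "(rv z \<bullet> f i)^2 \<le> P^2" for i
    proof -
      have "\<bar>rv z \<bullet> f i\<bar> \<le> \<bar>P\<bar>" using ab[of i] P1 by simp
      then show ?thesis by (simp add: abs_le_square_iff)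
    qed
    have "(norm (rv z))^2 = (\<Sum>i\<in>UNIV. (rv z \<bullet> f i)^2)" by (rule parseval[OF ortho, symmetric])
    also have "\<dots> \<le> of_nat (card (UNIV::'n set)) * P^2" by (rule sum_bounded_above) (rule sq)
    also have "\<dots> = d * P^2" unfolding d_def by (rule refl)
    also have "\<dots> \<le> d * d * P^2"
    proof -
      have dd: "d \<le> d*d" using d1 mult_left_mono[of 1 d d] by simp
      show ?thesis using dd by (intro mult_right_mono) simp_all
    qed
    also have "\<dots> = R^2" unfolding R_def power2_eq_square by (rule mult.assoc[symmetric, THEN trans]) (simp only: mult_ac)
    finally have "(norm (rv z))^2 \<le> R^2" .
    then have nR: "norm (rv z) \<le> R" by (rule power2_le_imp_le) (use R1 in linarith)
    show "z \<in> {z. \<forall>j. z$j \<in> {-N..N}}"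
    proof (simp, rule allI)
      fix j
      have "\<bar>rv z $ j\<bar> \<le> norm (rv z)" by (rule component_le_norm_cart)
      then have "real_of_int \<bar>z$j\<bar> \<le> R" using nR by (simp add: rv_def)
      then have "\<bar>z$j\<bar> \<le> N" unfolding N_def by (simp add: le_floor_iff)
      then show "- N \<le> z$j \<and> z$j \<le> N" by linarith
    qed
  qed
  have fb: "finite {z::int^'n. \<forall>j. z$j \<in> {-N..N}}" and cb: "card {z::int^'n. \<forall>j. z$j \<in> {-N..N}} \<le> (\<Prod>j\<in>(UNIV::'n set). card {-N..N})"
    using vec_box_finite_card[of "\<lambda>j. {-N..N}"] by auto
  have fin: "finite (box f i0 L P)" by (rule finite_subset[OF sub fb])
  have "card (box f i0 L P) \<le> nat (2*N+1) ^ CARD('n)"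
    using card_mono[OF fb sub] cb by simp
  then have "real (card (box f i0 L P)) \<le> real (nat (2*N+1)) ^ CARD('n)"
    by (metis of_nat_le_iff of_nat_power)
  also have "\<dots> \<le> (3 * R) ^ CARD('n)"
  proof (rule power_mono)
    have "N \<ge> 1" unfolding N_def using R1 by (simp add: le_floor_iff)
    then have "real (nat (2*N+1)) = 2 * real_of_int N + 1" by simp
    also have "\<dots> \<le> 2 * R + 1" unfolding N_def by simp
    also have "\<dots> \<le> 3 * R" using R1 by simp
    finally show "real (nat (2*N+1)) \<le> 3 * R" .
  qed simp
  finally show ?thesis using fin by (simp add: P_def R_def d_def mult.assoc)
qed


lemma dirichlet_nonneg: "dirichlet \<omega> ell h \<ge> 0"
proof -
  have "infsum (\<lambda>(x,y). (h y - h x)^2 * cond \<omega> ell x y) {(x,y). adj x y} \<ge> 0"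
    by (rule infsum_nonneg) (auto simp: cond_nonneg)
  then show ?thesis unfolding dirichlet_def by simp
qed

lemma Lambda_nonneg: "Lambda \<omega> ell B \<ge> 0"
  unfolding Lambda_def
  by (auto intro!: Inf_greatest simp: dirichlet_nonneg)

lemma powr_pow: "L > 0 \<Longrightarrow> (L powr a) ^ n = L powr (real n * a)"
proof -
  assume "L > 0"
  have "(L powr a) powr (real n) = L powr (a * real n)" by (rule powr_powr)
  then show ?thesis using powr_realpow[of "L powr a" n] \<open>L > 0\<close> by (simp add: mult.commute)
qed

theorem lemma6p1:
  fixes ellvec :: "real ^ 'n" and f :: "'n \<Rightarrow> real ^ 'n" and i0 :: 'n
    and lam \<alpha> :: real
  assumes "CARD('n) \<ge> 2"
    and "norm ellvec = 1"
    and "\<forall>i j. f i \<bullet> f j = (if i = j then 1 else 0)"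
    and "f i0 = ellvec"
    and "lam > 0"
    and "\<alpha> > real CARD('n) + 3"
  shows "\<exists>c>0. \<forall>L::real. \<forall>\<omega> :: 'n config. L \<ge> 1 \<longrightarrow>
           (\<exists>!C. C \<in> infinite_clusters \<omega>) \<longrightarrow> 0 \<in> Kinf \<omega> \<longrightarrow>
           Lambda \<omega> (lam *\<^sub>R ellvec) (box f i0 L (L powr \<alpha>))
             \<ge> ereal (c * L powr (- 2 * real CARD('n) * \<alpha>))
                * expE (ereal (- 2 * lam) * BKbox \<omega> ellvec f i0 L (L powr \<alpha>))"
proof -
  note ortho = assms(3) and nv = assms(2) and lam = assms(5)
  define d where "d = real CARD('n)"
  define c where "c = 1 / (2 * 3^CARD('n) * exp(3*lam) * (3*d)^(2*CARD('n)))"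
  have d1: "d \<ge> 1" unfolding d_def by (simp add: Suc_leI)
  have cpos: "c > 0" unfolding c_def using d1 by simp
  have \<alpha>1: "\<alpha> \<ge> 1" using assms(6) by simp
  show ?thesis
  proof (intro exI[of _ c] conjI cpos allI impI)
    fix L :: real and \<omega> :: "'n config"
    assume L: "L \<ge> 1" and "\<exists>!C. C \<in> infinite_clusters \<omega>" and K0: "0 \<in> Kinf \<omega>"
    let ?B = "box f i0 L (L powr \<alpha>)"
    let ?l = "lam *\<^sub>R ellvec"
    define A where "A = ?B \<inter> Kinf \<omega>"
    have finB: "finite ?B" and cardB: "real (card ?B) \<le> (3 * d * L powr \<alpha>) ^ CARD('n)"
      using box_card[OF ortho L \<alpha>1, of i0] unfolding d_def by auto
    have finA: "finite A" unfolding A_def using finB by simp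
    have cardA: "real (card A) \<le> (3 * d * L powr \<alpha>) ^ CARD('n)"
    proof -
      have "card A \<le> card ?B" unfolding A_def using finB by (simp add: card_mono)
      then show ?thesis using cardB by linarith
    qed
    have Lpos: "L > 0" using L by simp
    have rv0: "rv (0::int^'n) = 0" by (simp add: rv_def vec_eq_iff)
    have zB: "0 \<in> ?B" using Lpos by (simp add: box_def rv0)
    have BKge: "BK \<omega> ellvec x \<le> BKbox \<omega> ellvec f i0 L (L powr \<alpha>)" if "x \<in> ?B" for x
      unfolding BKbox_def using that by (rule SUP_upper)
    have BKnn: "BKbox \<omega> ellvec f i0 L (L powr \<alpha>) \<ge> 0"
      using BKge[OF zB] BK_nonneg[of \<omega> ellvec 0] by simp
    show "Lambda \<omega> ?l ?B \<ge> ereal (c * L powr (- 2 * real CARD('n) * \<alpha>))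
                * expE (ereal (- 2 * lam) * BKbox \<omega> ellvec f i0 L (L powr \<alpha>))"
    proof (cases "BKbox \<omega> ellvec f i0 L (L powr \<alpha>)")
      case PInf
      have e: "ereal (- 2 * lam) * \<infinity> = - \<infinity>"
        using lam by simp
      have e2: "expE (- \<infinity>) = 0" using expE.simps(3) MInfty_eq_minfinity by metis
      show ?thesis unfolding PInf e e2 using Lambda_nonneg[of \<omega> ?l ?B] by simp
    next
      case MInf then show ?thesis using BKnn by simp
    next
      case (real M)
      have BKx: "\<forall>x\<in>A. BK \<omega> ellvec x \<le> ereal M" using BKge real unfolding A_def by auto
      have rhs: "ereal (c * L powr (- 2 * real CARD('n) * \<alpha>))
                * expE (ereal (- 2 * lam) * BKbox \<omega> ellvec f i0 L (L powr \<alpha>))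
               = ereal (c * L powr (- 2 * real CARD('n) * \<alpha>) * exp (- 2 * lam * M))"
        using real by simp
      define Q where "Q = (3 * d) ^ CARD('n) * (L powr \<alpha>) ^ CARD('n)"
      have Qpos: "Q > 0" unfolding Q_def using d1 Lpos by simp
      have cardQ: "real (card A) \<le> Q" using cardA unfolding Q_def by (simp add: power_mult_distrib)
      have Q2: "Q^2 = (3*d)^(2*CARD('n)) * L powr (2 * real CARD('n) * \<alpha>)"
      proof -
        have "Q^2 = (3 * d) ^ (2*CARD('n)) * ((L powr \<alpha>) ^ CARD('n))^2"
          unfolding Q_def by (simp add: power_mult_distrib power_mult[symmetric] mult.commute)
        also have "((L powr \<alpha>) ^ CARD('n))^2 = L powr (2 * real CARD('n) * \<alpha>)"
          using powr_pow[OF Lpos, of \<alpha> "2 * CARD('n)"] by (simp add: power_mult[symmetric] mult.commute)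
        finally show ?thesis .
      qed
      define K2 where "K2 = 2 * 3^CARD('n) * exp(3*lam) * exp(2*lam*M)"
      have K2pos: "K2 > 0" unfolding K2_def by simp
      have target: "c * L powr (- 2 * real CARD('n) * \<alpha>) * exp (- 2 * lam * M) = 1 / (K2 * Q^2)"
      proof -
        have e1: "L powr (- 2 * real CARD('n) * \<alpha>) = 1 / L powr (2 * real CARD('n) * \<alpha>)"
          using powr_minus_divide[of L "2 * real CARD('n) * \<alpha>"] by simp
        have e2: "exp (- 2 * lam * M) = 1 / exp (2 * lam * M)"
          by (metis exp_minus inverse_eq_divide mult_minus_left)
        have p: "L powr (2 * real CARD('n) * \<alpha>) > 0" using Lpos by simp
        show ?thesis unfolding c_def K2_def Q2 e1 e2 using p d1 by (simp add: field_simps)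
      qed
      show ?thesis
      proof (cases "?B \<inter> Kinf \<omega> = {}")
        case True then show ?thesis unfolding rhs Lambda_def by simp
      next
        case False
        have "ereal (1 / (K2 * Q^2)) \<le> Inf (ereal ` {dirichlet \<omega> ?l h | h.
              (\<forall>x. x \<notin> ?B \<inter> Kinf \<omega> \<longrightarrow> h x = 0) \<and> sqrt (L2sq \<omega> ?l h) = 1})"
        proof (rule Inf_greatest)
          fix y assume "y \<in> ereal ` {dirichlet \<omega> ?l h | h.
              (\<forall>x. x \<notin> ?B \<inter> Kinf \<omega> \<longrightarrow> h x = 0) \<and> sqrt (L2sq \<omega> ?l h) = 1}"
          then obtain h where y: "y = ereal (dirichlet \<omega> ?l h)"
            and hz: "\<forall>x. x \<notin> A \<longrightarrow> h x = 0" and hs: "sqrt (L2sq \<omega> ?l h) = 1"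
            unfolding A_def by blast
          have L2: "L2sq \<omega> ?l h = 1" using hs by simp
          have AK: "A \<subseteq> Kinf \<omega>" unfolding A_def by blast
          have "1 \<le> K2 * (card A)^2 * dirichlet \<omega> ?l h"
            using sum_bound[OF finA AK BKx lam nv hz] L2 unfolding K2_def by simp
          also have "\<dots> \<le> K2 * Q^2 * dirichlet \<omega> ?l h"
          proof -
            have "real (card A)^2 \<le> Q^2" using cardQ by (simp add: power_mono)
            then show ?thesis using K2pos dirichlet_nonneg[of \<omega> ?l h]
              by (intro mult_right_mono mult_left_mono) auto
          qed
          finally have "1 / (K2 * Q^2) \<le> dirichlet \<omega> ?l h"
            using K2pos Qpos by (simp add: divide_le_eq mult.commute)
          then show "ereal (1 / (K2 * Q^2)) \<le> y" unfolding y by simp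
        qed
        then show ?thesis unfolding rhs Lambda_def target using False by simp
      qed
    qed
  qed
qed

end
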